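(* For every positive integer $m$, $$\frac13\cdot\frac{9^m}{m}\le F(m,3)\le\frac{\sqrt{27}}{4\pi}\cdot\frac{9^m}{m}.$$
   Context: For positive integers $m,i$, $F(m,i):=\sum_{v_1,\dots,v_i\in\mathbb Z_{\ge0},\ v_1+\cdots+v_i=m}\binom{m}{v_1,\dots,v_i}^2$, where $\binom{m}{v_1,\dots,v_i}=\frac{m!}{v_1!\cdots v_i!}$ is the multinomial coefficient. *)

theory Defs
  imports "HOL-Analysis.Analysis"
begin

definition multinom :: "nat \<Rightarrow> nat \<Rightarrow> (nat \<Rightarrow> nat) \<Rightarrow> nat" where
  "multinom m i v = fact m div (\<Prod>j<i. fact (v j))"

definition comps :: "nat \<Rightarrow> nat \<Rightarrow> (nat \<Rightarrow> nat) set" where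
  "comps m i = {v. (\<forall>j. j \<ge> i \<longrightarrow> v j = 0) \<and> (\<Sum>j<i. v j) = m}"

definition F :: "nat \<Rightarrow> nat \<Rightarrow> nat" where
  "F m i = (\<Sum>v\<in>comps m i. (multinom m i v)^2)"

end

theory Submission
  imports Defs "HOL-Probability.Probability" "HOL-Real_Asymp.Real_Asymp"
begin

definition T :: "nat \<Rightarrow> nat \<Rightarrow> nat" where
  "T n k = (n choose k)^2 * ((2*k) choose k)"

definition aa :: "nat \<Rightarrow> nat" where
  "aa n = (\<Sum>k\<le>n. T n k)"

lemma multinom3:
  assumes "k \<le> m" "a \<le> k"
  shows "multinom m 3 (\<lambda>j. if j = 0 then m - k else if j = 1 then a else if j = 2 then k - a else 0)
         = (m choose k) * (k choose a)"
proof -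
  have p: "(\<Prod>j<3. fact ((\<lambda>j::nat. if j = 0 then m - k else if j = 1 then a else if j = 2 then k - a else 0) j) :: nat)
        = fact (m-k) * fact a * fact (k-a)"
    by (simp add: numeral_3_eq_3 numeral_2_eq_2 lessThan_Suc)
  have f: "fact m = (m choose k) * (k choose a) * (fact (m-k) * fact a * fact (k-a) :: nat)"
    using binomial_fact_lemma[OF assms(1)] binomial_fact_lemma[OF assms(2)]
    by (metis mult.assoc mult.commute mult.left_commute)
  show ?thesis unfolding multinom_def p f by simp
qed

lemma F3: "F m 3 = aa m"
proof -
  define h where "h = (\<lambda>(k,a). (\<lambda>j::nat. if j = 0 then m - k else if j = 1 then a else if j = 2 then k - a else 0))"
  have bij: "bij_betw h (SIGMA k:{..m}. {..k}) (comps m 3)"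
  proof (rule bij_betwI[where g = "\<lambda>v. (v 1 + v 2, v 1)"])
    show "h \<in> (SIGMA k:{..m}. {..k}) \<rightarrow> comps m 3"
      by (auto simp: h_def comps_def numeral_3_eq_3 numeral_2_eq_2 lessThan_Suc)
    show "(\<lambda>v. (v 1 + v 2, v 1)) \<in> comps m 3 \<rightarrow> (SIGMA k:{..m}. {..k})"
      by (auto simp: comps_def numeral_3_eq_3 numeral_2_eq_2 lessThan_Suc)
    show "(\<lambda>v. (v 1 + v 2, v 1)) (h x) = x" if "x \<in> (SIGMA k:{..m}. {..k})" for x
      using that by (auto simp: h_def)
    show "h (v 1 + v 2, v 1) = v" if "v \<in> comps m 3" for v
    proof
      fix j show "h (v 1 + v 2, v 1) j = v j"
        using that by (auto simp: h_def comps_def numeral_3_eq_3 numeral_2_eq_2 lessThan_Suc)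
    qed
  qed
  have "F m 3 = (\<Sum>x\<in>(SIGMA k:{..m}. {..k}). (multinom m 3 (h x))^2)"
    unfolding F_def using sum.reindex_bij_betw[OF bij, of "\<lambda>v. (multinom m 3 v)^2"] by simp
  also have "\<dots> = (\<Sum>(k,a)\<in>(SIGMA k:{..m}. {..k}). ((m choose k) * (k choose a))^2)"
    by (rule sum.cong) (auto simp: h_def multinom3 simp del: power_mult_distrib)
  also have "\<dots> = (\<Sum>k\<le>m. \<Sum>a\<le>k. ((m choose k) * (k choose a))^2)"
    by (rule sum.Sigma[symmetric]) auto
  also have "\<dots> = (\<Sum>k\<le>m. (m choose k)^2 * (\<Sum>a\<le>k. (k choose a)^2))"
    by (simp add: power_mult_distrib sum_distrib_left)
  also have "\<dots> = aa m" by (simp add: aa_def T_def choose_square_sum)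
  finally show ?thesis .
qed

definition P :: "nat \<Rightarrow> nat \<Rightarrow> real" where
  "P n k = 12 * real k ^ 2 - 6 * real k + 8 * real n - 16 * real n * real k"

definition G :: "nat \<Rightarrow> nat \<Rightarrow> real" where
  "G n k = (if k = 0 then 0 else P n k * real (T (n - 1) (k - 1)))"

lemma choose_rel1: "real (l+1) * real (Suc m choose Suc l) = real (m+1) * real (m choose l)"
  using Suc_times_binomial[of l m] by (metis of_nat_mult Suc_eq_plus1)

lemma choose_rel2: "l \<le> m \<Longrightarrow> real (m+1-l) * real (Suc m choose l) = real (m+1) * real (m choose l)"
  using binomial_absorb_comp[of "Suc m" l] by (metis diff_Suc_1 of_nat_mult Suc_eq_plus1)

lemma choose_rel4: "l \<le> m \<Longrightarrow> real (l+1) * real (m choose Suc l) = (real m - real l) * real (m choose l)"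
proof -
  assume "l \<le> m"
  have "real (l+1) * real (Suc m choose Suc l) = real (m+1) * real (m choose l)" by (rule choose_rel1)
  moreover have "real (Suc m choose Suc l) = real (m choose l) + real (m choose Suc l)" by simp
  ultimately show ?thesis by (simp add: algebra_simps)
qed

lemma choose_rel5: "real (l+1) * real (l+1) * real ((2*l+2) choose (l+1)) = 2 * real (2*l+1) * real (l+1) * real ((2*l) choose l)"
proof -
  have a: "real (l+1) * real (Suc (2*l+1) choose Suc l) = real (2*l+1+1) * real ((2*l+1) choose l)"
    by (rule choose_rel1)
  have b: "real (l+1) * real (Suc (2*l) choose Suc l) = real (2*l+1) * real ((2*l) choose l)"
    by (rule choose_rel1)
  have c: "((2*l+1) choose l) = ((2*l+1) choose Suc l)"
    using binomial_symmetric[of l "2*l+1"] by simp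
  have d: "(2*l+2) choose (l+1) = Suc (2*l+1) choose Suc l" by simp
  have c': "((2*l+1) choose l) = Suc (2*l) choose Suc l" using c by simp
  have "real (l+1) * real (l+1) * real ((2*l+2) choose (l+1)) = real (l+1) * (real (2*l+1+1) * real ((2*l+1) choose l))"
    using a unfolding d by (simp only: mult.assoc)
  also have "\<dots> = real (2*l+1+1) * (real (l+1) * real (Suc (2*l) choose Suc l))" unfolding c' by (simp only: ac_simps)
  also have "\<dots> = 2 * real (2*l+1) * real (l+1) * real ((2*l) choose l)" unfolding b by (simp add: algebra_simps)
  finally show ?thesis .
qed

lemma Zlem: "real ((2*Suc l) choose Suc l) = 2 * real (2*l+1) * real ((2*l) choose l) / real (l+1)"
proof -
  define Y where "Y = real ((2*l) choose l)"
  have l1: "real (l+1) > 0" by simp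
  have w0: "2*Suc l = 2*l+2" by simp
  have w: "(2*Suc l) choose Suc l = (2*l+2) choose (l+1)" unfolding w0 by simp
  have "real (l+1) * (real (l+1) * real ((2*l+2) choose (l+1))) = real (l+1) * (2 * real (2*l+1) * Y)"
    using choose_rel5[of l] unfolding Y_def by (simp only: ac_simps)
  then have "real (l+1) * real ((2*l+2) choose (l+1)) = 2 * real (2*l+1) * Y" using l1 by simp
  then show ?thesis unfolding w Y_def[symmetric] using l1 by (simp add: eq_divide_eq mult.commute del: binomial_Suc_Suc)
qed

lemma T_real: "real (T n k) = real (n choose k)^2 * real ((2*k) choose k)"
  by (simp add: T_def)

lemma term_id:
  fixes m k :: nat
  shows "real (m+2)^2 * T (m+2) k - (10 * real (m+2)^2 - 10 * real (m+2) + 3) * T (m+1) k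
         + 9 * real (m+1)^2 * T m k = G (m+2) (k+1) - G (m+2) k"
proof (cases k)
  case 0
  then show ?thesis by (simp add: T_def G_def P_def algebra_simps power2_eq_square)
next
  case (Suc l)
  have G1: "G (m+2) (k+1) = P (m+2) (l+2) * T (m+1) (Suc l)" by (simp add: G_def Suc)
  have G2: "G (m+2) k = P (m+2) (l+1) * T (m+1) l" by (simp add: G_def Suc)
  consider "l \<le> m" | "l = m + 1" | "l > m + 1" by linarith
  then show ?thesis
  proof cases
    case 1
    define X where "X = real (m choose l)"
    define Y where "Y = real ((2*l) choose l)"
    have l1: "real (l+1) > 0" "real (m+1-l) > 0" using 1 by auto
    have A2: "real (Suc m choose Suc l) = real (m+1) * X / real (l+1)"
      using choose_rel1[of l m] l1 by (simp add: X_def field_simps del: binomial_Suc_Suc)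
    have B: "real (Suc m choose l) = real (m+1) * X / real (m+1-l)"
      using choose_rel2[OF 1] l1 by (simp add: X_def field_simps del: binomial_Suc_Suc)
    have A1: "real (Suc (Suc m) choose Suc l) = real (m+2) * (real (m+1) * X / real (m+1-l)) / real (l+1)"
      proof -
      have "real (Suc (Suc m) choose Suc l) = real (Suc m + 1) * real (Suc m choose l) / real (l+1)"
        using choose_rel1[of l "Suc m"] l1(1) by (simp add: eq_divide_eq mult.commute del: binomial_Suc_Suc)
      then show ?thesis unfolding B by simp
    qed
    have A3: "real (m choose Suc l) = (real m - real l) * X / real (l+1)"
      using choose_rel4[OF 1] l1 by (simp add: X_def field_simps del: binomial_Suc_Suc)
    have Z: "real ((2*Suc l) choose Suc l) = 2 * real (2*l+1) * Y / real (l+1)"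
      unfolding Y_def by (rule Zlem)
    have e: "real (m + 1 - l) = real m + 1 - real l" using 1 by simp
    have t1: "real (T (m+2) k) = (real (m+2) * (real (m+1) * X / real (m+1-l)) / real (l+1))^2 * (2 * real (2*l+1) * Y / real (l+1))"
      unfolding T_real Suc using A1 Z by (simp add: numeral_2_eq_2)
    have t2: "real (T (m+1) k) = (real (m+1) * X / real (l+1))^2 * (2 * real (2*l+1) * Y / real (l+1))"
      unfolding T_real Suc using A2 Z by simp
    have t3: "real (T m k) = ((real m - real l) * X / real (l+1))^2 * (2 * real (2*l+1) * Y / real (l+1))"
      unfolding T_real Suc using A3 Z by simp
    have t4: "real (T (m+1) l) = (real (m+1) * X / real (m+1-l))^2 * Y"
      unfolding T_real using B by (simp add: Y_def)
    define D where "D = real (m+1-l)"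
    have D0: "D \<noteq> 0" using l1 by (simp add: D_def)
    have L0: "real l + 1 \<noteq> 0" by (simp add: add_nonneg_eq_0_iff)
    define E where "E = real l + 1"
    have E0: "E \<noteq> 0" using L0 by (simp add: E_def)
    have hm: "real m = D + E - 2" using 1 by (simp add: D_def E_def)
    have hl: "real l = E - 1" by (simp add: E_def)
    show ?thesis
      unfolding G1 G2 t1 t2 t3 t4 P_def[abs_def] Suc[symmetric] D_def[symmetric]
      apply (simp only: of_nat_add of_nat_mult of_nat_numeral of_nat_1 hm hl)
      using D0 E0 by (simp add: field_simps power2_eq_square)
  next
    case 2
    have Z': "real (Suc (Suc (2*l)) choose Suc l) = 2 * real (2*l+1) * real ((2*l) choose l) / real (l+1)"
      using Zlem[of l] by (simp add: numeral_2_eq_2)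
    have L0: "real l + 1 \<noteq> 0" by (simp add: add_nonneg_eq_0_iff)
    have t1: "real (T (m+2) k) = 2 * real (2*l+1) * real ((2*l) choose l) / real (l+1)"
      unfolding T_real Suc 2 using Zlem[of "m+1"] by simp
    have t2: "real (T (m+1) k) = 0" "real (T m k) = 0" "real (T (m+1) (Suc l)) = 0"
      unfolding T_real Suc 2 by (simp_all add: binomial_eq_0 del: binomial_Suc_Suc)
    have t4: "real (T (m+1) l) = real ((2*l) choose l)"
      unfolding T_real 2 by simp
    show ?thesis
      unfolding G1 G2 t1 t2 t4 P_def using L0 unfolding 2
      by (simp add: field_simps power2_eq_square) 
  next
    case 3
    then show ?thesis unfolding Suc by (simp add: G_def T_def binomial_eq_0 del: binomial_Suc_Suc)
  qed
qed

lemma aa_ext: "n \<le> N \<Longrightarrow> real (aa n) = (\<Sum>k<Suc N. real (T n k))"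
  unfolding aa_def lessThan_Suc_atMost of_nat_sum by (rule sum.mono_neutral_left) (auto simp: T_def)

lemma aa_rec:
  "real (m+2)^2 * aa (m+2) - (10 * real (m+2)^2 - 10 * real (m+2) + 3) * aa (m+1)
         + 9 * real (m+1)^2 * aa m = 0"
proof -
  have "real (m+2)^2 * aa (m+2) - (10 * real (m+2)^2 - 10 * real (m+2) + 3) * aa (m+1)
         + 9 * real (m+1)^2 * aa m
      = (\<Sum>k<Suc (m+2). real (m+2)^2 * T (m+2) k - (10 * real (m+2)^2 - 10 * real (m+2) + 3) * T (m+1) k
         + 9 * real (m+1)^2 * T m k)"
    using aa_ext[of "m+1" "m+2"] aa_ext[of m "m+2"] aa_ext[of "m+2" "m+2"]
    by (simp only: sum.distrib sum_subtractf sum_distrib_left)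
  also have "\<dots> = (\<Sum>k<Suc (m+2). G (m+2) (Suc k) - G (m+2) k)"
    by (rule sum.cong) (auto simp: term_id[simplified])
  also have "\<dots> = G (m+2) (Suc (m+2)) - G (m+2) 0" by (rule sum_lessThan_telescope)
  also have "\<dots> = 0" by (simp add: G_def T_def binomial_eq_0 del: binomial_Suc_Suc)
  finally show ?thesis .
qed

lemma cos_int_has_integral:
  fixes m :: int
  shows "((\<lambda>t. cos (of_int m * t)) has_integral (if m = 0 then 2*pi else 0)) {-pi..pi}"
proof (cases "m = 0")
  case True
  then show ?thesis using has_integral_const_real[of "1::real" "-pi" pi] by simp
next
  case False
  have "((\<lambda>t. cos (of_int m * t)) has_integral (sin (of_int m * pi) / of_int m - sin (of_int m * (-pi)) / of_int m)) {-pi..pi}"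
  proof (rule fundamental_theorem_of_calculus)
    show "-pi \<le> pi" by simp
    fix x assume "x \<in> {-pi..pi}"
    have "((\<lambda>t. sin (of_int m * t) / of_int m) has_real_derivative (cos (of_int m * x) * of_int m / of_int m)) (at x)"
      by (auto intro!: derivative_eq_intros)
    then show "((\<lambda>t. sin (of_int m * t) / of_int m) has_vector_derivative cos (of_int m * x)) (at x within {-pi..pi})"
      using False by (simp add: has_real_derivative_iff_has_vector_derivative[symmetric] has_field_derivative_at_within)
  qed
  moreover have "sin (of_int m * pi) = 0" using sin_npi_int[of m] by (simp add: mult.commute)
  moreover have "sin (of_int m * (-pi)) = 0" using sin_npi_int[of "-m"] by (simp add: mult.commute)
  ultimately show ?thesis using False by simp
qed

lemma trig_expand:
  fixes a t :: real
  shows "(1 + a^2 + 2*a*cos t)^n =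
    (\<Sum>j\<le>n. \<Sum>k\<le>n. real (n choose j) * real (n choose k) * a^(j+k) * cos ((of_int (int j) - of_int (int k)) * t))"
proof -
  have e: "complex_of_real (1 + a^2 + 2*a*cos t) = (1 + of_real a * cis t) * (1 + of_real a * cis (-t))"
  proof -
    have c1: "cis t * cis (-t) = 1" by (simp add: cis_mult)
    have c2: "cis t + cis (-t) = complex_of_real (2 * cos t)" by (simp add: complex_eq_iff)
    have "(1 + of_real a * cis t) * (1 + of_real a * cis (-t)) = 1 + of_real a * (cis t + cis (-t)) + (of_real a)^2 * (cis t * cis (-t))"
      by (simp add: algebra_simps power2_eq_square)
    also have "\<dots> = complex_of_real (1 + a^2 + 2*a*cos t)" unfolding c1 c2 by simp
    finally show ?thesis by simp
  qed
  have "complex_of_real ((1 + a^2 + 2*a*cos t)^n) = (of_real a * cis t + 1)^n * (of_real a * cis (-t) + 1)^n"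
    unfolding of_real_power e by (simp add: power_mult_distrib add.commute)
  also have "\<dots> = (\<Sum>j\<le>n. of_nat (n choose j) * (of_real a * cis t)^j) * (\<Sum>k\<le>n. of_nat (n choose k) * (of_real a * cis (-t))^k)"
    unfolding binomial_ring by simp
  also have "\<dots> = (\<Sum>j\<le>n. \<Sum>k\<le>n. of_nat (n choose j) * (of_real a * cis t)^j * (of_nat (n choose k) * (of_real a * cis (-t))^k))"
    by (simp add: sum_product)
  also have "\<dots> = (\<Sum>j\<le>n. \<Sum>k\<le>n. complex_of_real (real (n choose j) * real (n choose k) * a^(j+k)) * cis ((of_int (int j) - of_int (int k)) * t))"
  proof (intro sum.cong refl)
    fix j k
    have "cis t ^ j * cis (-t) ^ k = cis ((of_int (int j) - of_int (int k)) * t)"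
    proof -
      have "cis t ^ j * cis (-t) ^ k = cis (real j * t + real k * (-t))" by (simp only: Complex.DeMoivre cis_mult)
      also have "real j * t + real k * (-t) = (of_int (int j) - of_int (int k)) * t" by (simp add: algebra_simps)
      finally show ?thesis .
    qed
    then show "of_nat (n choose j) * (of_real a * cis t)^j * (of_nat (n choose k) * (of_real a * cis (-t))^k) =
      complex_of_real (real (n choose j) * real (n choose k) * a^(j+k)) * cis ((of_int (int j) - of_int (int k)) * t)"
      by (simp add: power_mult_distrib power_add algebra_simps)
  qed
  finally have "Re (complex_of_real ((1 + a^2 + 2*a*cos t)^n)) = Re (\<Sum>j\<le>n. \<Sum>k\<le>n. complex_of_real (real (n choose j) * real (n choose k) * a^(j+k)) * cis ((of_int (int j) - of_int (int k)) * t))"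
    by simp
  then show ?thesis by (simp add: Re_sum)
qed

lemma trig_integral:
  fixes a :: real
  shows "((\<lambda>t. (1 + a^2 + 2*a*cos t)^n) has_integral (2*pi * (\<Sum>j\<le>n. real (n choose j)^2 * a^(2*j)))) {-pi..pi}"
proof -
  have "((\<lambda>t. \<Sum>j\<le>n. \<Sum>k\<le>n. real (n choose j) * real (n choose k) * a^(j+k) * cos ((of_int (int j) - of_int (int k)) * t))
      has_integral (\<Sum>j\<le>n. \<Sum>k\<le>n. real (n choose j) * real (n choose k) * a^(j+k) * (if int j - int k = 0 then 2*pi else 0))) {-pi..pi}"
    using cos_int_has_integral
    by (intro has_integral_sum finite_atMost has_integral_mult_right) (metis of_int_diff)
  also have "(\<Sum>j\<le>n. \<Sum>k\<le>n. real (n choose j) * real (n choose k) * a^(j+k) * (if int j - int k = 0 then 2*pi else 0))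
      = (\<Sum>j\<le>n. \<Sum>k\<le>n. if k = j then real (n choose j) * real (n choose k) * a^(j+k) * (2*pi) else 0)"
    by (intro sum.cong refl) auto
  also have "\<dots> = 2*pi * (\<Sum>j\<le>n. real (n choose j)^2 * a^(2*j))"
  proof -
    have "(\<Sum>j\<le>n. \<Sum>k\<le>n. if k = j then real (n choose j) * real (n choose k) * a^(j+k) * (2*pi) else 0)
        = (\<Sum>j\<le>n. real (n choose j) * real (n choose j) * a^(j+j) * (2*pi))"
      by (intro sum.cong refl) simp
    also have "\<dots> = (\<Sum>j\<le>n. 2*pi * (real (n choose j)^2 * a^(2*j)))"
    proof (intro sum.cong refl)
      fix j
      have "a^(j+j) = a^(2*j)" by (metis mult_2)
      then show "real (n choose j) * real (n choose j) * a^(j+j) * (2*pi) = 2*pi * (real (n choose j)^2 * a^(2*j))"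
        by (simp add: power2_eq_square)
    qed
    finally show ?thesis by (simp add: sum_distrib_left)
  qed
  finally show ?thesis unfolding trig_expand .
qed

lemma sin_ge_xcos:
  fixes x :: real
  assumes "0 \<le> x" "x \<le> pi/2"
  shows "x * cos x \<le> sin x"
proof (cases "x = 0")
  case True then show ?thesis by simp
next
  case False
  then have "0 < x" using assms by simp
  from MVT2[OF this, of sin cos] obtain z where z: "0 < z" "z < x" "sin x - sin 0 = (x - 0) * cos z"
    by (auto intro: DERIV_sin)
  have "cos x \<le> cos z" using z assms by (subst cos_mono_le_eq) auto
  then have "x * cos x \<le> x * cos z" using assms by (simp add: mult_left_mono)
  then show ?thesis using z by simp
qed

lemma one_minus_cos_ge:
  fixes t :: real
  assumes "\<bar>t\<bar> \<le> pi"
  shows "t^2 / pi^2 \<le> 1 - cos t"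
proof -
  define x where "x = \<bar>t\<bar>"
  have cx: "cos x = cos t" "x^2 = t^2" by (auto simp: x_def abs_if)
  have x: "0 \<le> x" "x \<le> pi" using assms by (auto simp: x_def)
  have pi2: "4 \<le> pi^2"
  proof -
    have "2 * 2 \<le> pi * pi" using pi_gt3 by (intro mult_mono) auto
    then show ?thesis by (simp add: power2_eq_square)
  qed
  show ?thesis
  proof (cases "x \<le> pi/2")
    case False
    then have "cos x \<le> cos (pi/2)" using x by (subst cos_mono_le_eq) auto
    then have "cos x \<le> 0" by simp
    moreover have "x^2 \<le> pi^2" using x by (simp add: power_mono)
    then have "t^2 / pi^2 \<le> 1" using cx by (simp add: divide_le_eq_1)
    ultimately show ?thesis using cx by linarith
  next
    case True
    have h: "0 \<le> x/2" "x/2 \<le> pi/2" using x by auto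
    have c4: "cos (pi/4) \<le> cos (x/2)" using True x by (subst cos_mono_le_eq) auto
    have "x/2 * (sqrt 2 / 2) \<le> x/2 * cos (x/2)" using c4 x by (intro mult_left_mono) (auto simp: cos_45)
    also have "\<dots> \<le> sin (x/2)" using sin_ge_xcos[OF h] .
    finally have s: "x/2 * (sqrt 2 / 2) \<le> sin (x/2)" .
    have s0: "0 \<le> x/2 * (sqrt 2 / 2)" using x by simp
    have "(x/2 * (sqrt 2 / 2))^2 \<le> sin (x/2) ^ 2" using s s0 by (rule power_mono)
    then have "x^2 / 8 \<le> sin (x/2)^2" by (simp add: power_mult_distrib power_divide)
    moreover have "cos x = 1 - 2 * sin (x/2)^2" using cos_double_sin[of "x/2"] by simp
    moreover have "x^2 / pi^2 \<le> x^2 / 4" using pi2 by (intro divide_left_mono) auto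
    ultimately have "x^2 / pi^2 \<le> 1 - cos x" by linarith
    then show ?thesis using cx by simp
  qed
qed

definition q :: "real \<Rightarrow> real \<Rightarrow> real" where
  "q t y = (1 + 4 * cos (y/2)^2 + 4 * cos (y/2) * cos t) / 9"

lemma q_nonneg:
  assumes "\<bar>y\<bar> \<le> pi"
  shows "0 \<le> q t y"
proof -
  have c: "0 \<le> cos (y/2)" using assms by (intro cos_ge_zero) auto
  have e: "1 + 4 * cos (y/2)^2 + 4 * cos (y/2) * cos t = (1 - 2 * cos (y/2))^2 + 4 * cos (y/2) * (1 + cos t)"
    by algebra
  have "0 \<le> 4 * cos (y/2) * (1 + cos t)" using c cos_ge_minus_one[of t] by (intro mult_nonneg_nonneg) linarith+
  then show ?thesis unfolding q_def e by simp
qed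

lemma q_upper:
  assumes "\<bar>t\<bar> \<le> pi" "\<bar>y\<bar> \<le> pi"
  shows "q t y \<le> exp (- (t^2 + y^2) / (9 * pi^2))"
proof -
  define c where "c = cos (y/2)"
  have c0: "0 \<le> c" "c \<le> 1" using assms unfolding c_def by (auto intro: cos_ge_zero)
  have e: "9 * (1 - q t y) = 4 * (1 - c) * (2 + c) + 4 * c * (1 - cos t)"
    unfolding q_def c_def by (simp add: algebra_simps power2_eq_square)
  have ht: "t^2 / pi^2 \<le> 1 - cos t" using assms(1) by (rule one_minus_cos_ge)
  have hy': "(y/2)^2 / pi^2 \<le> 1 - c" unfolding c_def using assms by (intro one_minus_cos_ge) auto
  have hy: "y^2 / (4 * pi^2) \<le> 1 - c" using hy' by (simp add: power_divide)
  have tb: "t^2 \<le> pi^2" "y^2 \<le> pi^2" using assms by (auto simp: abs_le_square_iff[symmetric])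
  have pp: "0 < pi^2" by simp
  have key: "(t^2 + y^2) / pi^2 \<le> 9 * (1 - q t y)"
  proof (cases "c \<ge> 1/4")
    case True
    have "y^2 / (4 * pi^2) * 2 \<le> (1 - c) * (2 + c)" using hy c0 by (intro mult_mono) (auto simp: divide_nonneg_pos)
    moreover have "1/4 * (t^2 / pi^2) \<le> c * (1 - cos t)" using True ht by (intro mult_mono) auto
    ultimately have "4 * (y^2 / (4 * pi^2) * 2) + 4 * (1/4 * (t^2 / pi^2)) \<le> 9 * (1 - q t y)"
      unfolding e by linarith
    moreover have "(t^2 + y^2) / pi^2 \<le> 4 * (y^2 / (4 * pi^2) * 2) + 4 * (1/4 * (t^2 / pi^2))"
      using pp by (simp add: field_simps)
    ultimately show ?thesis by linarith
  next
    case False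
    have "3/4 * 2 \<le> (1 - c) * (2 + c)" using False c0 by (intro mult_mono) auto
    moreover have "0 \<le> c * (1 - cos t)" using c0 by simp
    moreover have "(t^2 + y^2) / pi^2 \<le> 2" using tb pp by (simp add: divide_le_eq)
    ultimately show ?thesis unfolding e by linarith
  qed
  have "q t y \<le> 1 + (- (t^2 + y^2) / (9 * pi^2))" using key by (simp add: field_simps)
  also have "\<dots> \<le> exp (- (t^2 + y^2) / (9 * pi^2))" by (rule exp_ge_add_one_self)
  finally show ?thesis .
qed

definition Phi :: "nat \<Rightarrow> real \<Rightarrow> real" where
  "Phi n y = 2*pi/9^n * (\<Sum>k\<le>n. real (n choose k)^2 * (2 + 2*cos y)^k)"

lemma Phi_int: "((\<lambda>t. q t y ^ n) has_integral Phi n y) {-pi..pi}"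
proof -
  define a where "a = 2 * cos (y/2)"
  have a2: "a^2 = 2 + 2 * cos y"
    using cos_double_cos[of "y/2"] by (simp add: a_def power_mult_distrib)
  have "((\<lambda>t. (1 + a^2 + 2*a*cos t)^n / 9^n) has_integral (2*pi * (\<Sum>j\<le>n. real (n choose j)^2 * a^(2*j))) / 9^n) {-pi..pi}"
    by (intro has_integral_divide trig_integral)
  moreover have "(\<lambda>t. (1 + a^2 + 2*a*cos t)^n / 9^n) = (\<lambda>t. q t y ^ n)"
    by (rule ext) (simp add: q_def a_def power_divide power_mult_distrib algebra_simps)
  moreover have "(2*pi * (\<Sum>j\<le>n. real (n choose j)^2 * a^(2*j))) / 9^n = Phi n y"
    unfolding Phi_def power_mult a2 by simp
  ultimately show ?thesis by simp
qed

lemma aa_int: "(Phi n has_integral (4*pi^2 * aa n / 9^n)) {-pi..pi}"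
proof -
  have "((\<lambda>y. \<Sum>k\<le>n. 2*pi/9^n * real (n choose k)^2 * (1 + 1^2 + 2*1*cos y)^k) has_integral
      (\<Sum>k\<le>n. 2*pi/9^n * real (n choose k)^2 * (2*pi * (\<Sum>j\<le>k. real (k choose j)^2 * 1^(2*j))))) {-pi..pi}"
    by (intro has_integral_sum finite_atMost has_integral_mult_right trig_integral)
  moreover have "(\<lambda>y. \<Sum>k\<le>n. 2*pi/9^n * real (n choose k)^2 * (1 + 1^2 + 2*1*cos y)^k) = Phi n"
    by (rule ext) (simp add: Phi_def sum_distrib_left mult.assoc)
  moreover have "(\<Sum>k\<le>n. 2*pi/9^n * real (n choose k)^2 * (2*pi * (\<Sum>j\<le>k. real (k choose j)^2 * 1^(2*j))))
      = 4*pi^2 * aa n / 9^n"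
  proof -
    have "(\<Sum>j\<le>k. real (k choose j)^2 * 1^(2*j)) = real ((2*k) choose k)" for k
      using choose_square_sum[of k] by (metis (no_types, lifting) of_nat_power of_nat_sum one_power2 power_one sum.cong mult_1_right)
    then have "(\<Sum>k\<le>n. 2*pi/9^n * real (n choose k)^2 * (2*pi * (\<Sum>j\<le>k. real (k choose j)^2 * 1^(2*j))))
        = (\<Sum>k\<le>n. 4*pi^2/9^n * real (T n k))"
      by (intro sum.cong refl) (simp add: T_def power2_eq_square)
    also have "\<dots> = 4*pi^2 * aa n / 9^n" by (simp add: aa_def sum_distrib_left sum_divide_distrib)
    finally show ?thesis .
  qed
  ultimately show ?thesis by simp
qed

lemma gauss_has_integral:
  fixes c :: real
  assumes "c > 0"
  shows "((\<lambda>x. exp (- c * x^2)) has_integral sqrt (pi / c)) UNIV"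
proof -
  define sg where "sg = sqrt (1 / (2*c))"
  have sg: "sg > 0" "sg^2 = 1/(2*c)" using assms by (auto simp: sg_def)
  have "(normal_density 0 sg has_integral 1) UNIV"
    using has_integral_integral_lborel[OF integrable_normal_density[of sg 0]] integral_normal_density[of sg 0] sg(1) by metis
  then have "((\<lambda>x. sqrt (2*pi* sg^2) * normal_density 0 sg x) has_integral sqrt (2*pi* sg^2) * 1) UNIV"
    by (rule has_integral_mult_right)
  moreover have "(\<lambda>x. sqrt (2*pi* sg^2) * normal_density 0 sg x) = (\<lambda>x. exp (- c * x^2))"
  proof
    fix x
    have "sqrt (2*pi* sg^2) > 0" using sg assms by simp
    then show "sqrt (2*pi* sg^2) * normal_density 0 sg x = exp (- c * x^2)"
      unfolding normal_density_def using sg assms by (simp add: field_simps)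
  qed
  moreover have "sqrt (2*pi* sg^2) * 1 = sqrt (pi / c)" using sg assms by (simp add: field_simps)
  ultimately show ?thesis by simp
qed

lemma q_lim_real:
  "((\<lambda>x. q (u / sqrt x) (v / sqrt x) powr x) \<longlongrightarrow> exp (- (2*u^2/9 + v^2/6))) at_top"
proof -
  have "((\<lambda>x::real. ((1 + 4*cos((v / sqrt x)/2)^2 + 4*cos((v / sqrt x)/2)*cos(u/sqrt x))/9) powr x) \<longlongrightarrow> exp((- (3 * (v * v) / 2) - 2 * (u * u)) / 9)) at_top"
    by real_asymp
  moreover have "exp((- (3 * (v * v) / 2) - 2 * (u * u)) / 9) = exp (- (2*u^2/9 + v^2/6))"
    by (simp add: power2_eq_square field_simps)
  ultimately show ?thesis unfolding q_def by simp
qed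

lemma q_pos_real: "eventually (\<lambda>x. q (u / sqrt x) (v / sqrt x) > 0) at_top"
  unfolding q_def by real_asymp

lemma sqrt_big_real: "eventually (\<lambda>x::real. c \<le> pi * sqrt x) at_top"
  by real_asymp

lemma q_lim:
  "(\<lambda>n. q (u / sqrt (real n)) (v / sqrt (real n)) ^ n) \<longlonglongrightarrow> exp (- (2*u^2/9 + v^2/6))"
proof -
  have 1: "(\<lambda>n. q (u / sqrt (real n)) (v / sqrt (real n)) powr (real n)) \<longlonglongrightarrow> exp (- (2*u^2/9 + v^2/6))"
    using filterlim_compose[OF q_lim_real filterlim_real_sequentially] by (simp add: o_def)
  have "eventually (\<lambda>n. q (u / sqrt (real n)) (v / sqrt (real n)) > 0) sequentially"
    using q_pos_real filterlim_real_sequentially unfolding filterlim_iff by (auto simp: o_def)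
  then have "eventually (\<lambda>n. q (u / sqrt (real n)) (v / sqrt (real n)) powr (real n) = q (u / sqrt (real n)) (v / sqrt (real n)) ^ n) sequentially"
    by eventually_elim (simp add: powr_realpow)
  from tendsto_cong[OF this] 1 show ?thesis by simp
qed

lemma sqrt_big: "eventually (\<lambda>n. c \<le> pi * sqrt (real n)) sequentially"
  using sqrt_big_real filterlim_real_sequentially unfolding filterlim_iff by (auto simp: o_def)

lemma scale_int:
  assumes "(f has_integral I) {-pi..pi}" "s > 0"
  shows "((\<lambda>x. f (x / s)) has_integral (s * I)) {-pi* s..pi* s}"
proof -
  have "1/s \<noteq> 0" using assms by simp
  from has_integral_stretch_real[OF assms(1) this]
  have "((\<lambda>x. f (1 / s * x)) has_integral (1 / \<bar>1/s\<bar>) *\<^sub>R I) ((\<lambda>x. x / (1/s)) ` {-pi..pi})" .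
  moreover have "(\<lambda>x. x / (1/s)) ` {-pi..pi} = {-pi* s..pi* s}"
    using image_divide_atLeastAtMost[of "1/s" "-pi" pi] assms by simp
  moreover have "(1 / \<bar>1/s\<bar>) *\<^sub>R I = s * I" using assms by simp
  moreover have "(\<lambda>x. f (1 / s * x)) = (\<lambda>x. f (x / s))" by simp
  ultimately show ?thesis using assms(2) by (simp add: abs_of_pos)
qed

definition kap :: real where "kap = 1 / (9 * pi^2)"

lemma kap_pos: "kap > 0" by (simp add: kap_def)

definition fn :: "nat \<Rightarrow> real \<Rightarrow> real \<Rightarrow> real" where
  "fn n v u = (if \<bar>u\<bar> \<le> pi * sqrt (real n) \<and> \<bar>v\<bar> \<le> pi * sqrt (real n)
               then q (u / sqrt (real n)) (v / sqrt (real n)) ^ n else 0)"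

lemma fn_int:
  assumes "n \<ge> 1" "\<bar>v\<bar> \<le> pi * sqrt (real n)"
  shows "(fn n v has_integral sqrt (real n) * Phi n (v / sqrt (real n))) UNIV"
proof -
  define s where "s = sqrt (real n)"
  have s: "s > 0" using assms by (simp add: s_def)
  have "((\<lambda>x. q (x/s) (v/s) ^ n) has_integral (s * Phi n (v/s))) {-pi* s..pi* s}"
    using scale_int[OF Phi_int[of "v/s" n] s] .
  then have "((\<lambda>x. if x \<in> {-pi* s..pi* s} then q (x/s) (v/s) ^ n else 0) has_integral (s * Phi n (v/s))) UNIV"
    by (simp only: has_integral_restrict_UNIV)
  moreover have "(\<lambda>x. if x \<in> {-pi* s..pi* s} then q (x/s) (v/s) ^ n else 0) = fn n v"
    using assms(2) by (auto simp: fn_def s_def fun_eq_iff abs_le_iff)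
  ultimately show ?thesis by (simp add: s_def)
qed

lemma fn_zero:
  assumes "\<not> \<bar>v\<bar> \<le> pi * sqrt (real n)"
  shows "fn n v = (\<lambda>u. 0)"
  using assms by (auto simp: fn_def)

lemma fn_integrable: "n \<ge> 1 \<Longrightarrow> fn n v integrable_on UNIV"
  using fn_int fn_zero by (metis has_integral_integrable integrable_0)

lemma fn_bound:
  assumes "n \<ge> 1"
  shows "\<bar>fn n v u\<bar> \<le> exp (- kap * u^2) * exp (- kap * v^2)"
proof (cases "\<bar>u\<bar> \<le> pi * sqrt (real n) \<and> \<bar>v\<bar> \<le> pi * sqrt (real n)")
  case True
  define s where "s = sqrt (real n)"
  have s: "s > 0" "s^2 = real n" using assms by (auto simp: s_def)
  have t: "\<bar>u/s\<bar> \<le> pi" "\<bar>v/s\<bar> \<le> pi" using True s by (auto simp: s_def divide_le_eq abs_divide)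
  have q0: "0 \<le> q (u/s) (v/s)" using q_nonneg t(2) .
  have "q (u/s) (v/s) ^ n \<le> exp (- ((u/s)^2 + (v/s)^2) / (9 * pi^2)) ^ n"
    using q_upper[OF t] q0 by (rule power_mono)
  also have "\<dots> = exp (real n * (- ((u/s)^2 + (v/s)^2) / (9 * pi^2)))"
    by (simp only: exp_of_nat_mult)
  also have "real n * (- ((u/s)^2 + (v/s)^2) / (9 * pi^2)) = - kap * u^2 + - kap * v^2"
    using s assms by (simp add: kap_def power_divide field_simps)
  also have "exp (- kap * u^2 + - kap * v^2) = exp (- kap * u^2) * exp (- kap * v^2)"
    by (rule exp_add)
  finally show ?thesis using True q0 by (simp add: fn_def s_def)
next
  case False
  then have "fn n v u = 0" by (auto simp: fn_def)
  then show ?thesis by simp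
qed

definition Fn :: "nat \<Rightarrow> real \<Rightarrow> real" where
  "Fn n v = integral UNIV (fn n v)"

lemma Fn_int:
  assumes "n \<ge> 1"
  shows "(Fn n has_integral real n * (4*pi^2 * aa n / 9^n)) UNIV"
proof -
  define s where "s = sqrt (real n)"
  have s: "s > 0" "s * s = real n" using assms by (auto simp: s_def)
  have eq: "Fn n = (\<lambda>v. if v \<in> {-pi* s..pi* s} then s * Phi n (v/s) else 0)"
  proof
    fix v show "Fn n v = (if v \<in> {-pi* s..pi* s} then s * Phi n (v/s) else 0)"
    proof (cases "\<bar>v\<bar> \<le> pi * s")
      case True
      then show ?thesis using fn_int[OF assms, of v] by (auto simp: Fn_def s_def abs_le_iff intro: integral_unique)
    next
      case False
      then show ?thesis using fn_zero[of v n] by (auto simp: Fn_def s_def abs_le_iff)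
    qed
  qed
  have "((\<lambda>v. Phi n (v/s)) has_integral (s * (4*pi^2 * aa n / 9^n))) {-pi* s..pi* s}"
    using scale_int[OF aa_int s(1)] .
  then have "((\<lambda>v. s * Phi n (v/s)) has_integral (s * (s * (4*pi^2 * aa n / 9^n)))) {-pi* s..pi* s}"
    by (rule has_integral_mult_right)
  then have "(Fn n has_integral (s * (s * (4*pi^2 * aa n / 9^n)))) UNIV"
    unfolding eq by (simp only: has_integral_restrict_UNIV)
  then show ?thesis using s by (simp add: mult.assoc[symmetric])
qed

lemma gauss_integral: "(c::real) > 0 \<Longrightarrow> integral UNIV (\<lambda>x. exp (- c * x^2)) = sqrt (pi / c)"
  using gauss_has_integral by (rule integral_unique)

lemma gauss_integrable:
  fixes c :: real
  assumes "c > 0" shows "(\<lambda>x. exp (- c * x^2)) integrable_on UNIV"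
  using gauss_has_integral[OF assms] by (rule has_integral_integrable)

lemma inner_lim:
  "(\<lambda>k. Fn (Suc k) v) \<longlonglongrightarrow> exp (-(v^2)/6) * sqrt (pi / (2/9))"
proof -
  define g where "g = (\<lambda>u. exp (-(v^2)/6) * exp (- (2/9) * u^2))"
  have lim: "(\<lambda>k. integral UNIV (fn (Suc k) v)) \<longlonglongrightarrow> integral UNIV g"
  proof (rule dominated_convergence(2)[where h = "\<lambda>u. exp (- kap * v^2) * exp (- kap * u^2)"])
    show "fn (Suc k) v integrable_on UNIV" for k by (rule fn_integrable) simp
    show "(\<lambda>u. exp (- kap * v^2) * exp (- kap * u^2)) integrable_on UNIV"
      by (intro integrable_on_mult_right gauss_integrable kap_pos)
    show "norm (fn (Suc k) v u) \<le> exp (- kap * v^2) * exp (- kap * u^2)" for k u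
      using fn_bound[of "Suc k" v u] by (simp add: mult.commute)
    show "(\<lambda>k. fn (Suc k) v u) \<longlonglongrightarrow> g u" for u
    proof -
      have "eventually (\<lambda>n. max \<bar>u\<bar> \<bar>v\<bar> \<le> pi * sqrt (real n)) sequentially" by (rule sqrt_big)
      then have ev: "eventually (\<lambda>n. fn n v u = q (u / sqrt (real n)) (v / sqrt (real n)) ^ n) sequentially"
        by eventually_elim (auto simp: fn_def)
      have "(\<lambda>n. fn n v u) \<longlonglongrightarrow> exp (- (2*u^2/9 + v^2/6))"
        using tendsto_cong[OF ev] q_lim by simp
      moreover have "exp (- (2*u^2/9 + v^2/6)) = g u"
        by (simp add: g_def exp_add[symmetric] algebra_simps)
      ultimately show ?thesis using LIMSEQ_Suc by simp
    qed
  qed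
  have "integral UNIV g = exp (-(v^2)/6) * sqrt (pi / (2/9))"
  proof -
    have "integral UNIV g = exp (-(v^2)/6) * integral UNIV (\<lambda>u. exp (- (2/9) * u^2))"
      unfolding g_def by (rule integral_mult_right)
    then show ?thesis using gauss_integral[of "2/9"] by simp
  qed
  then show ?thesis using lim by (simp add: Fn_def)
qed

lemma Fn_bound:
  assumes "n \<ge> 1"
  shows "\<bar>Fn n v\<bar> \<le> exp (- kap * v^2) * sqrt (pi / kap)"
proof -
  have "norm (integral UNIV (fn n v)) \<le> integral UNIV (\<lambda>u. exp (- kap * v^2) * exp (- kap * u^2))"
  proof (rule integral_norm_bound_integral)
    show "fn n v integrable_on UNIV" using assms by (rule fn_integrable)
    show "(\<lambda>u. exp (- kap * v^2) * exp (- kap * u^2)) integrable_on UNIV"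
      by (intro integrable_on_mult_right gauss_integrable kap_pos)
    show "norm (fn n v u) \<le> exp (- kap * v^2) * exp (- kap * u^2)" for u
      using fn_bound[OF assms, of v u] by (simp add: mult.commute)
  qed
  also have "\<dots> = exp (- kap * v^2) * sqrt (pi / kap)"
    using gauss_integral[OF kap_pos] by (simp only: integral_mult_right)
  finally show ?thesis by (simp add: Fn_def)
qed

lemma main_lim:
  "(\<lambda>k. real (Suc k) * (4*pi^2 * aa (Suc k) / 9^(Suc k))) \<longlonglongrightarrow> sqrt (pi / (2/9)) * sqrt (pi / (1/6))"
proof -
  define g where "g = (\<lambda>v. sqrt (pi / (2/9)) * exp (- (1/6) * v^2))"
  have lim: "(\<lambda>k. integral UNIV (Fn (Suc k))) \<longlonglongrightarrow> integral UNIV g"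
  proof (rule dominated_convergence(2)[where h = "\<lambda>v. sqrt (pi / kap) * exp (- kap * v^2)"])
    show "Fn (Suc k) integrable_on UNIV" for k
    proof -
      have "(Fn (Suc k) has_integral real (Suc k) * (4*pi^2 * aa (Suc k) / 9^(Suc k))) UNIV"
        by (rule Fn_int) simp
      then show ?thesis by (rule has_integral_integrable)
    qed
    show "(\<lambda>v. sqrt (pi / kap) * exp (- kap * v^2)) integrable_on UNIV"
      by (intro integrable_on_mult_right gauss_integrable kap_pos)
    show "norm (Fn (Suc k) v) \<le> sqrt (pi / kap) * exp (- kap * v^2)" for k v
      using Fn_bound[of "Suc k" v] by (simp add: mult.commute)
    show "(\<lambda>k. Fn (Suc k) v) \<longlonglongrightarrow> g v" for v
      using inner_lim[of v] by (simp add: g_def mult.commute)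
  qed
  have "integral UNIV g = sqrt (pi / (2/9)) * sqrt (pi / (1/6))"
  proof -
    have "integral UNIV g = sqrt (pi / (2/9)) * integral UNIV (\<lambda>v. exp (- (1/6) * v^2))"
      unfolding g_def by (rule integral_mult_right)
    then show ?thesis using gauss_integral[of "1/6"] by simp
  qed
  moreover have "integral UNIV (Fn (Suc k)) = real (Suc k) * (4*pi^2 * aa (Suc k) / 9^(Suc k))" for k
    using Fn_int[of "Suc k"] by (simp add: integral_unique)
  ultimately show ?thesis using lim by simp
qed

definition r :: "nat \<Rightarrow> real" where "r n = real n * aa n / 9^n"

lemma r_lim: "(\<lambda>k. r (Suc k)) \<longlonglongrightarrow> sqrt 27 / (4 * pi)"
proof -
  have "(\<lambda>k. real (Suc k) * (4*pi^2 * aa (Suc k) / 9^(Suc k)) / (4*pi^2)) \<longlonglongrightarrow> sqrt (pi / (2/9)) * sqrt (pi / (1/6)) / (4*pi^2)"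
    by (intro tendsto_divide main_lim tendsto_const) simp
  moreover have "sqrt (pi / (2/9)) * sqrt (pi / (1/6)) / (4*pi^2) = sqrt 27 / (4 * pi)"
  proof -
    have "sqrt (pi / (2/9)) * sqrt (pi / (1/6)) = sqrt (27 * pi^2)"
      by (simp add: real_sqrt_mult[symmetric] power2_eq_square field_simps)
    also have "\<dots> = sqrt 27 * pi" by (simp add: real_sqrt_mult)
    finally show ?thesis by (simp add: power2_eq_square)
  qed
  moreover have "real (Suc k) * (4*pi^2 * aa (Suc k) / 9^(Suc k)) / (4*pi^2) = r (Suc k)" for k
    by (simp add: r_def)
  ultimately show ?thesis by simp
qed

lemma aa_1: "aa (Suc 0) = 3" by (simp add: aa_def T_def)
lemma aa_2: "aa (Suc (Suc 0)) = 15" by (simp add: aa_def T_def atMost_Suc numeral_eq_Suc)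

lemma ratio: "n \<ge> 1 \<Longrightarrow> 9 * real n * aa n \<le> real (n+1) * aa (n+1)"
proof (induction n rule: dec_induct)
  case base
  then show ?case by (simp add: aa_1 aa_2)
next
  case (step n)
  define A where "A = real (aa n)"
  define B where "B = real (aa (n+1))"
  define C where "C = real (aa (n+2))"
  define x where "x = real n"
  have x1: "x \<ge> 1" using step by (simp add: x_def)
  have B0: "B \<ge> 0" by (simp add: B_def)
  have rec: "(x+2)^2 * C - (10 * (x+2)^2 - 10 * (x+2) + 3) * B + 9 * (x+1)^2 * A = 0"
    using aa_rec[of n] by (simp add: A_def B_def C_def x_def add.commute)
  have IH: "9 * x * A \<le> (x+1) * B" using step.IH by (simp add: A_def B_def x_def add.commute[of "real n" 1])
  have h1: "9 * x * A * (x+1)^2 \<le> (x+1) * B * (x+1)^2" using IH by (intro mult_right_mono) auto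
  have h2: "(2*x - 1) * B \<ge> 0" using x1 B0 by simp
  have rc: "(x+2)^2 * C = (10 * (x+2)^2 - 10 * (x+2) + 3) * B - 9 * (x+1)^2 * A" using rec by linarith
  have "x * (x+2) * ((x+2) * C - 9 * (x+1) * B) = x * ((x+2)^2 * C) - 9 * x * (x+1) * (x+2) * B"
    by (simp add: algebra_simps power2_eq_square)
  also have "\<dots> = x * ((10 * (x+2)^2 - 10 * (x+2) + 3) * B - 9 * (x+1)^2 * A) - 9 * x * (x+1) * (x+2) * B"
    by (simp only: rc)
  also have "\<dots> = x * (x^2 + 3*x + 5) * B - 9 * x * A * (x+1)^2"
    by (simp add: algebra_simps power2_eq_square)
  finally have key: "x * (x+2) * ((x+2) * C - 9 * (x+1) * B) = x * (x^2 + 3*x + 5) * B - 9 * x * A * (x+1)^2" .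
  have "x * (x+2) * ((x+2) * C - 9 * (x+1) * B) \<ge> 0"
    using key h1 h2 by (simp add: algebra_simps power2_eq_square power3_eq_cube)
  moreover have p: "0 < x * (x+2)" using x1 by simp
  ultimately have "0 \<le> (x * (x+2) * ((x+2) * C - 9 * (x+1) * B)) / (x * (x+2))"
    by (intro divide_nonneg_pos)
  moreover have "(x * (x+2) * ((x+2) * C - 9 * (x+1) * B)) / (x * (x+2)) = (x+2) * C - 9 * (x+1) * B"
    using p x1 by (intro nonzero_mult_div_cancel_left) auto
  ultimately have "(x+2) * C - 9 * (x+1) * B \<ge> 0" by simp
  then show ?case by (simp add: B_def C_def x_def add.commute)
qed

lemma r_step: "n \<ge> 1 \<Longrightarrow> r n \<le> r (Suc n)"
proof -
  assume n: "n \<ge> 1"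
  have "9 * real n * aa n \<le> real (n+1) * aa (n+1)" using ratio[OF n] .
  then have "9 * real n * aa n / 9^(Suc n) \<le> real (n+1) * aa (n+1) / 9^(Suc n)"
    by (intro divide_right_mono) auto
  moreover have "9 * real n * aa n / 9^(Suc n) = r n" by (simp add: r_def)
  moreover have "real (n+1) * aa (n+1) / 9^(Suc n) = r (Suc n)" by (simp add: r_def)
  ultimately show ?thesis by simp
qed

lemma r_inc: "incseq (\<lambda>k. r (Suc k))"
  by (rule incseq_SucI) (rule r_step, simp)

lemma r_bounds:
  assumes "m \<ge> 1"
  shows "1/3 \<le> r m \<and> r m \<le> sqrt 27 / (4 * pi)"
proof -
  obtain k where k: "m = Suc k" using assms by (cases m) auto
  have "r (Suc k) \<le> sqrt 27 / (4 * pi)" using incseq_le[OF r_inc r_lim] .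
  moreover have "r (Suc 0) \<le> r (Suc k)" using r_inc unfolding incseq_def by auto
  moreover have "r (Suc 0) = 1/3" by (simp add: r_def aa_1)
  ultimately show ?thesis using k by simp
qed

theorem mainTheorem19:
  fixes m :: nat
  assumes "m \<ge> 1"
  shows "(1/3) * (9 ^ m / real m) \<le> real (F m 3)
       \<and> real (F m 3) \<le> sqrt 27 / (4 * pi) * (9 ^ m / real m)"
proof -
  have pos: "9 ^ m / real m > 0" using assms by simp
  have e: "real (F m 3) = r m * (9 ^ m / real m)"
    using assms by (simp add: F3 r_def)
  show ?thesis unfolding e using r_bounds[OF assms] pos
    by (intro conjI mult_right_mono) auto
qed

end
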